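(* Let $(X,\mathscr{L}_X)$ and $(Y,\mathscr{L}_Y)$ be weak Lipschitz spaces and let $f: X\to Y$ be a weak Lipschitz map. Then $f$ is continuous with respect to the topologies $\widehat{\tau}(\mathscr{L}_X)$ on $X$ and $\widehat{\tau}(\mathscr{L}_Y)$ on $Y$.
   Context: A weak pseudo-metric on a set $Z$ is a symmetric map $d: Z\times Z\to[0,\infty)$ satisfying $d(z_1,z_2)\le d(z_1,z)+d(z,z_2)$ for all $z,z_1,z_2$ and vanishing at at least one point of the diagonal (not necessarily on the whole diagonal). A weak Lipschitz structure for $Z$ is a non-empty family $\mathscr{L}$ of weak pseudo-metrics on $Z$ such that (L1) if $d$ is a weak pseudo-metric with $d\le d_1$ for some $d_1\in\mathscr{L}$ then $d\in\mathscr{L}$; (L2) $d\in\mathscr{L}$ implies $\alpha d\in\mathscr{L}$ for all real $\alpha>0$; (L3) $d_1,d_2\in\mathscr{L}$ imply $d_1\vee d_2\in\mathscr{L}$; the pair $(Z,\mathscr{L})$ is a weak Lipschitz space. $\widehat{\tau}(\mathscr{L})$ is the topology on $Z$ generated (as a subbase) by the sets $U_{d,\varepsilon}(z)=\{\xi\in Z: d(\xi,z)<\varepsilon\}$ with $d\in\mathscr{L}$, $z\in Z$, and real $\varepsilon>d(z,z)$. A map $f:X\to Y$ is a weak Lipschitz map if for every $d_Y\in\mathscr{L}_Y$ there is $d_X\in\mathscr{L}_X$ with $d_Y(f(x_1),f(x_2))\le d_X(x_1,x_2)$ for all $x_1,x_2\in X$. *)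

theory Defs
  imports "HOL-Analysis.Analysis"
begin

text \<open>Weak pseudo-metric on the whole type 'a (the set Z is the universe of 'a).\<close>
definition weak_pseudo_metric :: "('a \<Rightarrow> 'a \<Rightarrow> real) \<Rightarrow> bool" where
  "weak_pseudo_metric d \<longleftrightarrow>
     (\<forall>x y. 0 \<le> d x y) \<and>
     (\<forall>x y. d x y = d y x) \<and>
     (\<forall>z z1 z2. d z1 z2 \<le> d z1 z + d z z2) \<and>
     (\<exists>z. d z z = 0)"

definition weak_lipschitz_structure :: "('a \<Rightarrow> 'a \<Rightarrow> real) set \<Rightarrow> bool" where
  "weak_lipschitz_structure L \<longleftrightarrow>
     L \<noteq> {} \<and>
     (\<forall>d\<in>L. weak_pseudo_metric d) \<and>
     (\<forall>d d1. weak_pseudo_metric d \<and> d1 \<in> L \<and> (\<forall>x y. d x y \<le> d1 x y) \<longrightarrow> d \<in> L) \<and>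
     (\<forall>d\<in>L. \<forall>\<alpha>::real. \<alpha> > 0 \<longrightarrow> (\<lambda>x y. \<alpha> * d x y) \<in> L) \<and>
     (\<forall>d1\<in>L. \<forall>d2\<in>L. (\<lambda>x y. max (d1 x y) (d2 x y)) \<in> L)"

text \<open>The subbase of \<open>\<tau>(L)\<close>; UNIV is added so that the generated topology lives on all of Z
  (the empty intersection of subbasic sets).\<close>
definition lip_subbase :: "('a \<Rightarrow> 'a \<Rightarrow> real) set \<Rightarrow> 'a set set" where
  "lip_subbase L = insert UNIV
     {{\<xi>. d \<xi> z < \<epsilon>} | d z \<epsilon>. d \<in> L \<and> \<epsilon> > d z z}"

definition lip_topology :: "('a \<Rightarrow> 'a \<Rightarrow> real) set \<Rightarrow> 'a topology" where
  "lip_topology L = topology_generated_by (lip_subbase L)"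

definition weak_lipschitz_map ::
  "('a \<Rightarrow> 'a \<Rightarrow> real) set \<Rightarrow> ('b \<Rightarrow> 'b \<Rightarrow> real) set \<Rightarrow> ('a \<Rightarrow> 'b) \<Rightarrow> bool" where
  "weak_lipschitz_map LX LY f \<longleftrightarrow>
     (\<forall>dY\<in>LY. \<exists>dX\<in>LX. \<forall>x1 x2. dY (f x1) (f x2) \<le> dX x1 x2)"

end

theory Submission
  imports Defs
begin

theorem theorem4p5:
  fixes LX :: "('a \<Rightarrow> 'a \<Rightarrow> real) set" and LY :: "('b \<Rightarrow> 'b \<Rightarrow> real) set"
    and f :: "'a \<Rightarrow> 'b"
  assumes "weak_lipschitz_structure LX" and "weak_lipschitz_structure LY"
    and "weak_lipschitz_map LX LY f"
  shows "continuous_map (lip_topology LX) (lip_topology LY) f"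
proof -
  let ?TX = "lip_topology LX"
  have topX: "topspace ?TX = UNIV" unfolding lip_topology_def lip_subbase_def by auto
  have topY: "topspace (lip_topology LY) = UNIV" unfolding lip_topology_def lip_subbase_def by auto
  have LY_wpm: "\<forall>d\<in>LY. weak_pseudo_metric d" using assms(2) unfolding weak_lipschitz_structure_def by blast
  have istop: "istopology (\<lambda>U. openin ?TX (f -` U))"
    unfolding istopology_def by (auto simp: vimage_Union intro!: openin_Union)
  have sub: "openin ?TX (f -` S)" if S: "S \<in> lip_subbase LY" for S
  proof (cases "S = UNIV")
    case True then show ?thesis using topX by (metis openin_topspace vimage_UNIV)
  next
    case False
    then obtain d z \<epsilon> where d: "d \<in> LY" and S_eq: "S = {\<xi>. d \<xi> z < \<epsilon>}"
      using S unfolding lip_subbase_def by auto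
    obtain dX where dX: "dX \<in> LX" "\<forall>x1 x2. d (f x1) (f x2) \<le> dX x1 x2"
      using assms(3) d unfolding weak_lipschitz_map_def by blast
    have wd: "weak_pseudo_metric d" using LY_wpm d by blast
    define d' where "d' = (\<lambda>x1 x2. \<bar>d (f x1) z - d (f x2) z\<bar>)"
    have le: "d' x y \<le> dX x y" for x y
    proof -
      have "d (f x) z \<le> d (f x) (f y) + d (f y) z" "d (f y) z \<le> d (f y) (f x) + d (f x) z"
        using wd unfolding weak_pseudo_metric_def by (blast, blast)
      moreover have "d (f y) (f x) = d (f x) (f y)" using wd unfolding weak_pseudo_metric_def by auto
      ultimately show ?thesis using dX(2)[rule_format, of x y] unfolding d'_def by linarith
    qed
    have wd': "weak_pseudo_metric d'" unfolding weak_pseudo_metric_def d'_def by auto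
    have d'L: "d' \<in> LX" using assms(1) wd' dX(1) le unfolding weak_lipschitz_structure_def by blast
    show ?thesis
    proof (subst openin_subopen, intro ballI)
      fix x0 assume x0: "x0 \<in> f -` S"
      define r where "r = \<epsilon> - d (f x0) z"
      have r: "r > 0" using x0 S_eq r_def by auto
      let ?U = "{\<xi>. d' \<xi> x0 < r}"
      have "d' x0 x0 = 0" by (simp add: d'_def)
      hence "?U \<in> lip_subbase LX"
        unfolding lip_subbase_def using d'L r
        by (intro insertI2 CollectI exI[of _ d'] exI[of _ x0] exI[of _ r]) simp
      hence "openin ?TX ?U" unfolding lip_topology_def by (rule topology_generated_by_Basis)
      moreover have "x0 \<in> ?U" using r by (simp add: d'_def)
      moreover have "?U \<subseteq> f -` S" using S_eq r_def by (auto simp: d'_def)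
      ultimately show "\<exists>T. openin ?TX T \<and> x0 \<in> T \<and> T \<subseteq> f -` S" by blast
    qed
  qed
  have "openin ?TX (f -` U)" if "openin (lip_topology LY) U" for U
    using generate_topology_on_coarsest[OF istop, of "lip_subbase LY" U] sub that
    unfolding lip_topology_def by (auto simp: openin_topology_generated_by_iff)
  then show ?thesis unfolding continuous_map_def using topX topY by (auto simp: vimage_def)
qed

end
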